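(* Let $G=(U,V,E)$ be a finite bipartite graph, $F\subseteq E$, and let $(E_r,E_b)$ be an $(A,B,C)$-free bipartition of the set $E_c$ of committed edges of $G$. Let $G-F=(U,V,E\setminus F)$. Then there are no alternating cycles of $E_r$ relative to $G-F$.
   Context: $\hat{E}=\{uv: u\in U,\ v\in V,\ uv\notin E\}$. Two edges $u_1v_1,u_2v_2\in E$ ($u_i\in U$, $v_i\in V$) are in conflict in $G$ if $u_1v_2\notin E$ and $u_2v_1\notin E$. An edge is committed if it is in conflict with some other edge of $E$. A bipartition of $E_c$ is a pair $(E_r,E_b)$ with $E_r\cap E_b=\emptyset$, $E_r\cup E_b=E_c$, $F\cap E_c\subseteq E_b$. It is $(A,B,C)$-free if there are no $u_1,u_2\in U$, $v_1,v_2\in V$ forming: $(A_1)$: $u_1v_1,u_2v_2\in E_r$, $u_1v_2,u_2v_1\in\hat{E}$; $(A_2)$: $u_1v_1,u_2v_2\in E_b$, $u_1v_2,u_2v_1\in\hat{E}$; $(B_1)$: $u_1v_1,u_2v_2\in E_r$, $u_1v_2\in\hat{E}$, $u_2v_1\in E_b$; $(B_2)$: $u_1v_1,u_2v_2\in E_b$, $u_1v_2\in\hat{E}$, $u_2v_1\in E_r$; $(C)$: $u_1v_1,u_2v_2\in E_r$, $u_1v_2\in\hat{E}$, $u_2v_1\in F$. For a bipartite graph $H=(U,V,E_H)$, $M\subseteq E_H$ and $k\ge2$, an alternating cycle of $M$ relative to $H$ is a set of $k$ distinct vertices $u_0,\dots,u_{k-1}\in U$ and $k$ distinct vertices $v_0,\dots,v_{k-1}\in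 V$ with $u_iv_i\notin E_H$ and $u_{i+1}v_i\in M$ for all $0\le i<k$ (indices modulo $k$). *)

theory Defs
  imports Main
begin

definition nonedges :: "'u set \<Rightarrow> 'v set \<Rightarrow> ('u \<times> 'v) set \<Rightarrow> ('u \<times> 'v) set" where
  "nonedges U V E = {(u,v). u \<in> U \<and> v \<in> V \<and> (u,v) \<notin> E}"

definition in_conflict :: "('u \<times> 'v) set \<Rightarrow> ('u \<times> 'v) \<Rightarrow> ('u \<times> 'v) \<Rightarrow> bool" where
  "in_conflict E e1 e2 \<longleftrightarrow> e1 \<in> E \<and> e2 \<in> E \<and>
     (fst e1, snd e2) \<notin> E \<and> (fst e2, snd e1) \<notin> E"

definition committed :: "('u \<times> 'v) set \<Rightarrow> ('u \<times> 'v) set" where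
  "committed E = {e \<in> E. \<exists>e' \<in> E. e' \<noteq> e \<and> in_conflict E e e'}"

definition is_bipartition :: "('u \<times> 'v) set \<Rightarrow> ('u \<times> 'v) set \<Rightarrow> ('u \<times> 'v) set \<Rightarrow> ('u \<times> 'v) set \<Rightarrow> bool" where
  "is_bipartition E F Er Eb \<longleftrightarrow> Er \<inter> Eb = {} \<and> Er \<union> Eb = committed E \<and> F \<inter> committed E \<subseteq> Eb"

definition ABC_free :: "'u set \<Rightarrow> 'v set \<Rightarrow> ('u \<times> 'v) set \<Rightarrow> ('u \<times> 'v) set \<Rightarrow> ('u \<times> 'v) set \<Rightarrow> ('u \<times> 'v) set \<Rightarrow> bool" where
  "ABC_free U V E F Er Eb \<longleftrightarrow>
    \<not> (\<exists>u1\<in>U. \<exists>u2\<in>U. \<exists>v1\<in>V. \<exists>v2\<in>V.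
      ((u1,v1) \<in> Er \<and> (u2,v2) \<in> Er \<and> (u1,v2) \<in> nonedges U V E \<and> (u2,v1) \<in> nonedges U V E) \<or>
      ((u1,v1) \<in> Eb \<and> (u2,v2) \<in> Eb \<and> (u1,v2) \<in> nonedges U V E \<and> (u2,v1) \<in> nonedges U V E) \<or>
      ((u1,v1) \<in> Er \<and> (u2,v2) \<in> Er \<and> (u1,v2) \<in> nonedges U V E \<and> (u2,v1) \<in> Eb) \<or>
      ((u1,v1) \<in> Eb \<and> (u2,v2) \<in> Eb \<and> (u1,v2) \<in> nonedges U V E \<and> (u2,v1) \<in> Er) \<or>
      ((u1,v1) \<in> Er \<and> (u2,v2) \<in> Er \<and> (u1,v2) \<in> nonedges U V E \<and> (u2,v1) \<in> F))"

definition alternating_cycle :: "'u set \<Rightarrow> 'v set \<Rightarrow> ('u \<times> 'v) set \<Rightarrow> ('u \<times> 'v) set \<Rightarrow> nat \<Rightarrow> (nat \<Rightarrow> 'u) \<Rightarrow> (nat \<Rightarrow> 'v) \<Rightarrow> bool" where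
  "alternating_cycle U V EH M k u v \<longleftrightarrow> k \<ge> 2 \<and>
     inj_on u {..<k} \<and> inj_on v {..<k} \<and>
     (\<forall>i<k. u i \<in> U \<and> v i \<in> V \<and> (u i, v i) \<notin> EH \<and> (u ((i + 1) mod k), v i) \<in> M)"

end

theory Submission
  imports Defs
begin

context
  fixes U :: "'u set" and V :: "'v set" and E F Er Eb :: "('u \<times> 'v) set"
  assumes EUV: "E \<subseteq> U \<times> V" and FE: "F \<subseteq> E"
    and bp: "is_bipartition E F Er Eb" and abc: "ABC_free U V E F Er Eb"
begin

lemma RE: "(x,y) \<in> Er \<Longrightarrow> (x,y) \<in> E"
  using bp unfolding is_bipartition_def committed_def by blast
lemma BE: "(x,y) \<in> Eb \<Longrightarrow> (x,y) \<in> E"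
  using bp unfolding is_bipartition_def committed_def by blast
lemma RB: "(x,y) \<in> Er \<Longrightarrow> (x,y) \<in> Eb \<Longrightarrow> False"
  using bp unfolding is_bipartition_def by blast
lemma FB: "(x,y) \<in> F \<Longrightarrow> (x,y) \<in> Er \<or> (x,y) \<in> Eb \<Longrightarrow> (x,y) \<in> Eb"
  using bp unfolding is_bipartition_def by blast
lemma commit: "(x,y) \<in> E \<Longrightarrow> (p,q) \<in> E \<Longrightarrow> (x,q) \<notin> E \<Longrightarrow> (p,y) \<notin> E \<Longrightarrow> (x,y) \<in> Er \<or> (x,y) \<in> Eb"
proof -
  assume a: "(x,y) \<in> E" "(p,q) \<in> E" "(x,q) \<notin> E" "(p,y) \<notin> E"
  then have "(p,q) \<noteq> (x,y)" by auto
  with a have "(x,y) \<in> committed E" unfolding committed_def in_conflict_def by force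
  then show ?thesis using bp unfolding is_bipartition_def by blast
qed
lemma ncommit: "(x,y) \<in> E \<Longrightarrow> (x,y) \<notin> Er \<Longrightarrow> (x,y) \<notin> Eb \<Longrightarrow> (p,q) \<in> E \<Longrightarrow> (x,q) \<in> E \<or> (p,y) \<in> E"
  using commit by blast

lemma ne: "(x,y) \<in> E \<Longrightarrow> (p,q) \<in> E \<Longrightarrow> (x,q) \<notin> E \<Longrightarrow> (x,q) \<in> nonedges U V E"
  using EUV unfolding nonedges_def by auto

lemma A1: assumes "(u1,v1) \<in> Er" "(u2,v2) \<in> Er" "(u1,v2) \<notin> E" "(u2,v1) \<notin> E" shows False
proof -
  have "(u1,v1) \<in> E" "(u2,v2) \<in> E" using assms RE BE by auto
  then have "u1 \<in> U" "v1 \<in> V" "u2 \<in> U" "v2 \<in> V" using EUV by auto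
  then show False using abc assms unfolding ABC_free_def nonedges_def by blast
qed

lemma A2: assumes "(u1,v1) \<in> Eb" "(u2,v2) \<in> Eb" "(u1,v2) \<notin> E" "(u2,v1) \<notin> E" shows False
proof -
  have "(u1,v1) \<in> E" "(u2,v2) \<in> E" using assms RE BE by auto
  then have "u1 \<in> U" "v1 \<in> V" "u2 \<in> U" "v2 \<in> V" using EUV by auto
  then show False using abc assms unfolding ABC_free_def nonedges_def by blast
qed

lemma B1: assumes "(u1,v1) \<in> Er" "(u2,v2) \<in> Er" "(u1,v2) \<notin> E" "(u2,v1) \<in> Eb" shows False
proof -
  have "(u1,v1) \<in> E" "(u2,v2) \<in> E" using assms RE BE by auto
  then have "u1 \<in> U" "v1 \<in> V" "u2 \<in> U" "v2 \<in> V" using EUV by auto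
  then show False using abc assms unfolding ABC_free_def nonedges_def by blast
qed

lemma B2: assumes "(u1,v1) \<in> Eb" "(u2,v2) \<in> Eb" "(u1,v2) \<notin> E" "(u2,v1) \<in> Er" shows False
proof -
  have "(u1,v1) \<in> E" "(u2,v2) \<in> E" using assms RE BE by auto
  then have "u1 \<in> U" "v1 \<in> V" "u2 \<in> U" "v2 \<in> V" using EUV by auto
  then show False using abc assms unfolding ABC_free_def nonedges_def by blast
qed

lemma C: assumes "(u1,v1) \<in> Er" "(u2,v2) \<in> Er" "(u1,v2) \<notin> E" "(u2,v1) \<in> F" shows False
proof -
  have "(u1,v1) \<in> E" "(u2,v2) \<in> E" using assms RE BE by auto
  then have "u1 \<in> U" "v1 \<in> V" "u2 \<in> U" "v2 \<in> V" using EUV by auto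
  then show False using abc assms unfolding ABC_free_def nonedges_def by blast
qed

lemma Rconf: assumes "(x,y) \<in> Er" obtains p q where "(p,q) \<in> Eb" "(x,q) \<notin> E" "(p,y) \<notin> E"
proof -
  have "(x,y) \<in> committed E" using assms bp unfolding is_bipartition_def by blast
  then obtain p q where pq: "(p,q) \<in> E" "(x,q) \<notin> E" "(p,y) \<notin> E"
    unfolding committed_def in_conflict_def by fastforce
  have "(p,q) \<in> Er \<or> (p,q) \<in> Eb" using commit[OF pq(1) RE[OF assms] pq(3) pq(2)] .
  moreover have "(p,q) \<notin> Er" using A1[OF assms _ pq(2) pq(3)] by blast
  ultimately show ?thesis using that pq by blast
qed

lemma Bconf: assumes "(x,y) \<in> Eb" obtains p q where "(p,q) \<in> Er" "(x,q) \<notin> E" "(p,y) \<notin> E"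
proof -
  have "(x,y) \<in> committed E" using assms bp unfolding is_bipartition_def by blast
  then obtain p q where pq: "(p,q) \<in> E" "(x,q) \<notin> E" "(p,y) \<notin> E"
    unfolding committed_def in_conflict_def by fastforce
  have "(p,q) \<in> Er \<or> (p,q) \<in> Eb" using commit[OF pq(1) BE[OF assms] pq(3) pq(2)] .
  moreover have "(p,q) \<notin> Eb" using A2[OF assms _ pq(2) pq(3)] by blast
  ultimately show ?thesis using that pq by blast
qed



lemma RRf: "(u1,v1) \<in> Er \<Longrightarrow> (u2,v2) \<in> Er \<Longrightarrow> (u1,v2) \<in> F \<Longrightarrow> (u2,v1) \<in> Er"
  using RE BE RB FB commit ncommit A1 A2 B1 B2 C Rconf Bconf FE by (smt (verit, best) in_mono subsetD)

lemma PRRne: assumes "(x1,y1) \<in> Er" "(x2,y2) \<in> Er" "(x1,y2) \<notin> E"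
  shows "(x2,y1) \<in> Er \<or> (\<exists>a d. (a,y1) \<in> Er \<and> (x2,d) \<in> Er \<and> (a,d) \<notin> E)"
  using assms by blast

lemma PRRf: assumes "(x1,y1) \<in> Er" "(x2,y2) \<in> Er" "(x1,y2) \<in> F"
  shows "(x2,y1) \<in> Er \<or> (\<exists>a d. (a,y1) \<in> Er \<and> (x2,d) \<in> Er \<and> (a,d) \<notin> E)"
  using RRf[OF assms] by blast

lemma PRNne: assumes x1: "(x1,y1) \<in> Er" and a2: "(a2,y2) \<in> Er" and x2: "(x2,d2) \<in> Er"
    and ad: "(a2,d2) \<notin> E" and c: "(x1,y2) \<notin> E"
  shows "(x2,y1) \<in> Er \<or> (\<exists>a d. (a,y1) \<in> Er \<and> (x2,d) \<in> Er \<and> (a,d) \<notin> E)"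
proof (rule ccontr)
  assume "\<not> ?thesis"
  then have G: "\<And>a d. (a,y1) \<in> Er \<Longrightarrow> (x2,d) \<in> Er \<Longrightarrow> (a,d) \<in> E" by blast
  have x1d2: "(x1,d2) \<in> E" using G[OF x1 x2] .
  have nR: "(x1,d2) \<notin> Er" using A1[of x1 d2 a2 y2] a2 c ad by blast
  have x2y2E: "(x2,y2) \<in> E" using A1[OF x2 a2] ad by blast
  have x2y2B: "(x2,y2) \<notin> Eb" using B1[OF a2 x2 ad] by blast
  have x2y2R: "(x2,y2) \<notin> Er"
  proof
    assume "(x2,y2) \<in> Er"
    from G[OF x1 this] c show False by blast
  qed
  have incl: "\<And>z. (x1,z) \<in> E \<Longrightarrow> (x2,z) \<in> E" using ncommit[OF x2y2E x2y2R x2y2B] c by blast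
  obtain p q where pq: "(p,q) \<in> Eb" "(x2,q) \<notin> E" "(p,d2) \<notin> E" using Rconf[OF x2] by blast
  have "(x1,q) \<notin> E" using incl pq(2) by blast
  then have "(x1,d2) \<in> Er \<or> (x1,d2) \<in> Eb" using commit[OF x1d2 BE[OF pq(1)]] pq(3) by blast
  then show False using nR A2[OF _ pq(1) \<open>(x1,q) \<notin> E\<close> pq(3)] by blast
qed

lemma PRNf: assumes "(x1,y1) \<in> Er" "(a2,y2) \<in> Er" "(x2,d2) \<in> Er" "(a2,d2) \<notin> E" "(x1,y2) \<in> F"
  shows "(x2,y1) \<in> Er \<or> (\<exists>a d. (a,y1) \<in> Er \<and> (x2,d) \<in> Er \<and> (a,d) \<notin> E)"
  using assms RE BE RB FB commit ncommit A1 A2 B1 B2 C Rconf Bconf FE RRf by metis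

lemma PNRne: assumes a1: "(a1,y1) \<in> Er" and x1: "(x1,d1) \<in> Er" and ad: "(a1,d1) \<notin> E"
    and x2: "(x2,y2) \<in> Er" and c: "(x1,y2) \<notin> E"
  shows "(x2,y1) \<in> Er \<or> (\<exists>a d. (a,y1) \<in> Er \<and> (x2,d) \<in> Er \<and> (a,d) \<notin> E)"
proof (rule ccontr)
  assume "\<not> ?thesis"
  then have G: "\<And>a d. (a,y1) \<in> Er \<Longrightarrow> (x2,d) \<in> Er \<Longrightarrow> (a,d) \<in> E" by blast
  have a1y2: "(a1,y2) \<in> E" using G[OF a1 x2] .
  have nR: "(a1,y2) \<notin> Er" using A1[of x1 d1 a1 y2] x1 c ad by blast
  have x1y1E: "(x1,y1) \<in> E" using A1[OF a1 x1] ad by blast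
  have x1y1B: "(x1,y1) \<notin> Eb" using B1[OF a1 x1 ad] by blast
  have x1y1R: "(x1,y1) \<notin> Er"
  proof
    assume "(x1,y1) \<in> Er"
    from G[OF this x2] c show False by blast
  qed
  have incl: "\<And>z. (z,y2) \<in> E \<Longrightarrow> (z,y1) \<in> E" using ncommit[OF x1y1E x1y1R x1y1B] c by blast
  obtain p q where pq: "(p,q) \<in> Eb" "(a1,q) \<notin> E" "(p,y1) \<notin> E" using Rconf[OF a1] by blast
  have "(p,y2) \<notin> E" using incl pq(3) by blast
  then have "(a1,y2) \<in> Er \<or> (a1,y2) \<in> Eb" using commit[OF a1y2 BE[OF pq(1)]] pq(2) by blast
  then show False using nR A2[OF _ pq(1) pq(2) \<open>(p,y2) \<notin> E\<close>] by blast
qed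

lemma PNRf: assumes "(a1,y1) \<in> Er" "(x1,d1) \<in> Er" "(a1,d1) \<notin> E" "(x2,y2) \<in> Er" "(x1,y2) \<in> F"
  shows "(x2,y1) \<in> Er \<or> (\<exists>a d. (a,y1) \<in> Er \<and> (x2,d) \<in> Er \<and> (a,d) \<notin> E)"
  using assms RE BE RB FB commit ncommit A1 A2 B1 B2 C Rconf Bconf FE RRf by metis

lemma PNNne: assumes "(a1,y1) \<in> Er" "(x1,d1) \<in> Er" "(a1,d1) \<notin> E" "(a2,y2) \<in> Er" "(x2,d2) \<in> Er" "(a2,d2) \<notin> E" "(x1,y2) \<notin> E"
  shows "(x2,y1) \<in> Er \<or> (\<exists>a d. (a,y1) \<in> Er \<and> (x2,d) \<in> Er \<and> (a,d) \<notin> E)"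
  using assms RE BE RB FB commit ncommit A1 A2 B1 B2 C Rconf Bconf FE by metis

lemma PNNf: assumes "(a1,y1) \<in> Er" "(x1,d1) \<in> Er" "(a1,d1) \<notin> E" "(a2,y2) \<in> Er" "(x2,d2) \<in> Er" "(a2,d2) \<notin> E" "(x1,y2) \<in> F"
  shows "(x2,y1) \<in> Er \<or> (\<exists>a d. (a,y1) \<in> Er \<and> (x2,d) \<in> Er \<and> (a,d) \<notin> E)"
  using assms RE BE RB FB commit ncommit A1 A2 B1 B2 C Rconf Bconf FE by (smt (verit, ccfv_threshold))

definition "XX = {(c,b). (c,b) \<in> Er \<or> (\<exists>a d. (a,b) \<in> Er \<and> (c,d) \<in> Er \<and> (a,d) \<notin> E)}"

lemma Er_XX: "Er \<subseteq> XX"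
  unfolding XX_def by auto

lemma XX_mem: "(c,b) \<in> XX \<longleftrightarrow> (c,b) \<in> Er \<or> (\<exists>a d. (a,b) \<in> Er \<and> (c,d) \<in> Er \<and> (a,d) \<notin> E)"
  unfolding XX_def by simp

lemma XX_sub1: assumes h: "(c,b) \<in> XX" shows "(c,b) \<in> E - F"
proof (cases "(c,b) \<in> Er")
  case True
  have "(c,b) \<in> E" using RE[OF True] .
  moreover have "(c,b) \<notin> F" using FB[of c b] RB[OF True] True by blast
  ultimately show ?thesis by blast
next
  case False
  then obtain a d where w: "(a,b) \<in> Er" "(c,d) \<in> Er" "(a,d) \<notin> E" using h XX_mem by blast
  have "(c,b) \<in> E" using A1[OF w] by blast
  moreover have "(c,b) \<notin> F" using C[OF w] by blast
  ultimately show ?thesis by blast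
qed

lemma XX_sub: "XX \<subseteq> E - F"
proof
  fix z assume "z \<in> XX"
  then show "z \<in> E - F" using XX_sub1[of "fst z" "snd z"] by simp
qed

lemma XX_P: assumes "(x1,y1) \<in> XX" "(x2,y2) \<in> XX" "(x1,y2) \<notin> E - F" shows "(x2,y1) \<in> XX"
proof -
  have c: "(x1,y2) \<notin> E \<or> (x1,y2) \<in> F" using assms(3) by blast
  have h1: "(x1,y1) \<in> Er \<or> (\<exists>a d. (a,y1) \<in> Er \<and> (x1,d) \<in> Er \<and> (a,d) \<notin> E)" using assms(1) XX_mem by blast
  have h2: "(x2,y2) \<in> Er \<or> (\<exists>a d. (a,y2) \<in> Er \<and> (x2,d) \<in> Er \<and> (a,d) \<notin> E)" using assms(2) XX_mem by blast
  have "(x2,y1) \<in> Er \<or> (\<exists>a d. (a,y1) \<in> Er \<and> (x2,d) \<in> Er \<and> (a,d) \<notin> E)"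
  proof (cases "(x1,y1) \<in> Er")
    case R1: True
    show ?thesis
    proof (cases "(x2,y2) \<in> Er")
      case True
      then show ?thesis using c PRRne[OF R1 True] PRRf[OF R1 True] by blast
    next
      case False
      then obtain a2 d2 where w: "(a2,y2) \<in> Er" "(x2,d2) \<in> Er" "(a2,d2) \<notin> E" using h2 by blast
      show ?thesis using c PRNne[OF R1 w] PRNf[OF R1 w] by blast
    qed
  next
    case False
    then obtain a1 d1 where w1: "(a1,y1) \<in> Er" "(x1,d1) \<in> Er" "(a1,d1) \<notin> E" using h1 by blast
    show ?thesis
    proof (cases "(x2,y2) \<in> Er")
      case True
      then show ?thesis using c PNRne[OF w1 True] PNRf[OF w1 True] by blast
    next
      case False
      then obtain a2 d2 where w: "(a2,y2) \<in> Er" "(x2,d2) \<in> Er" "(a2,d2) \<notin> E" using h2 by blast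
      show ?thesis using c PNNne[OF w1 w] PNNf[OF w1 w] by blast
    qed
  qed
  then show ?thesis using XX_mem by blast
qed

end

lemma cyc_gen:
  fixes k :: nat
  assumes XY: "X \<subseteq> Y"
    and P: "\<And>x1 y1 x2 y2. (x1,y1) \<in> X \<Longrightarrow> (x2,y2) \<in> X \<Longrightarrow> (x1,y2) \<notin> Y \<Longrightarrow> (x2,y1) \<in> X"
  shows "k \<ge> 1 \<Longrightarrow> \<forall>i<k. (u i, v i) \<notin> Y \<and> (u ((i+1) mod k), v i) \<in> X \<Longrightarrow> False"
proof (induction k arbitrary: u v rule: less_induct)
  case (less k)
  note H = less.prems(2)
  show False
  proof (cases "k = 1")
    case True
    then show False using H XY by auto
  next
    case False
    with less.prems(1) have k2: "k \<ge> 2" by simp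
    have k0: "0 < k" using k2 by simp
    have m1: "Suc 0 mod k = Suc 0" using k2 by simp
    have e0: "(u 1, v 0) \<in> X" using H[rule_format, OF k0] m1 by simp
    have e1: "(u ((1+1) mod k), v 1) \<in> X" using H k2 by simp
    have d1: "(u 1, v 1) \<notin> Y" using H k2 by simp
    have w: "(u (2 mod k), v 0) \<in> X" using P[OF e0 e1 d1] by (simp add: numeral_2_eq_2)
    define u' where "u' i = u (if i = 0 then 0 else i+1)" for i
    define v' where "v' i = v (if i = 0 then 0 else i+1)" for i
    have "\<forall>i<k-1. (u' i, v' i) \<notin> Y \<and> (u' ((i+1) mod (k-1)), v' i) \<in> X"
    proof (intro allI impI conjI)
      fix i assume i: "i < k - 1"
      show "(u' i, v' i) \<notin> Y" using H i unfolding u'_def v'_def by auto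
      show "(u' ((i+1) mod (k-1)), v' i) \<in> X"
      proof (cases "i = 0")
        case True
        have "u' ((i+1) mod (k-1)) = u (2 mod k)"
        proof (cases "k = 2")
          case True then show ?thesis using \<open>i = 0\<close> unfolding u'_def by simp
        next
          case False then have "k > 2" using k2 by simp
          then show ?thesis using \<open>i = 0\<close> unfolding u'_def by (auto simp add: numeral_2_eq_2)
        qed
        then show ?thesis using w True unfolding v'_def by simp
      next
        case False
        have Hi: "(u ((i+1+1) mod k), v (i+1)) \<in> X" using H i by simp
        have "u' ((i+1) mod (k-1)) = u ((i+1+1) mod k)"
        proof (cases "i+1 < k-1")
          case True then show ?thesis unfolding u'_def by simp
        next
          case False then have "i + 1 = k - 1" using i by simp
          then have "(i+1+1) mod k = 0" using k2 by simp
          moreover have "(i+1) mod (k-1) = 0" using \<open>i + 1 = k - 1\<close> by simp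
          ultimately show ?thesis unfolding u'_def by simp
        qed
        then show ?thesis using Hi False unfolding v'_def by simp
      qed
    qed
    moreover have "k - 1 < k" "k - 1 \<ge> 1" using k2 by auto
    ultimately show False using less.IH by blast
  qed
qed


theorem lemma6:
  fixes U :: "'u set" and V :: "'v set" and E F Er Eb :: "('u \<times> 'v) set"
  assumes "finite U" and "finite V" and "E \<subseteq> U \<times> V" and "F \<subseteq> E"
    and "is_bipartition E F Er Eb" and "ABC_free U V E F Er Eb"
  shows "\<not> (\<exists>k u v. alternating_cycle U V (E - F) Er k u v)"
proof
  assume "\<exists>k u v. alternating_cycle U V (E - F) Er k u v"
  then obtain k u v where ac: "alternating_cycle U V (E - F) Er k u v" by blast
  let ?X = "XX E Er"
  have sub: "?X \<subseteq> E - F" using XX_sub[OF assms(3-6)] .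
  have P: "\<And>x1 y1 x2 y2. (x1,y1) \<in> ?X \<Longrightarrow> (x2,y2) \<in> ?X \<Longrightarrow> (x1,y2) \<notin> E - F \<Longrightarrow> (x2,y1) \<in> ?X"
    using XX_P[OF assms(3-6)] by blast
  have ErX: "Er \<subseteq> ?X" using Er_XX[OF assms(3-6)] .
  have k1: "k \<ge> 1" using ac unfolding alternating_cycle_def by simp
  have H: "\<forall>i<k. (u i, v i) \<notin> E - F \<and> (u ((i+1) mod k), v i) \<in> ?X"
    using ac ErX unfolding alternating_cycle_def by blast
  show False using cyc_gen[OF sub P k1 H] .
qed

end
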